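(* Consider the following two-bidder auction. A single good has common value $v$ with CDF $F_v$, density $f_v$, support $\mathbb{R}_+$ and finite mean. Assume $\mathbb{E}[v]>L\ge 0$ and let $\underline v$ in the support of $F_v$ satisfy $L=\mathbb{E}[\tilde v\mid\tilde v<\underline v]$ ($\tilde v\sim F_v$). Alice submits a bid knowing only $F_v$; then $v$ is realized and Bob, observing $v$ but not Alice's bid, submits a bid. The highest bid wins and pays its bid (payoff $v$ minus bid) unless it is strictly below $L$, in which case the good is unsold. If the bids tie, Bob wins; if Bob's bid equals $L$ he can win; a winning bid of Alice equal exactly to $L$ results in no sale. Define $$\beta_L(v)=\begin{cases}\mathbb{E}[\tilde v\mid \tilde v<v] & v\ge \underline v,\\ L & L<v<\underline v,\\ 0 & v\le L.\end{cases}$$ Suppose Alice draws $v'\sim F_v$ independently of $v$ and bids $\beta_L(v')$. Then Bob's best response, upon observing $v$, is to bid $\beta_L(v)$.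
   Context: Bidders are risk neutral. *)

theory Defs
  imports "HOL-Probability.Probability"
begin

definition cdf :: "(real \<Rightarrow> real) \<Rightarrow> real \<Rightarrow> real" where
  "cdf f x = (LINT t:{..<x}|lborel. f t)"

text \<open>Conditional mean E[v | v < x]; by the convention x/0 = 0 it is 0 when F(x) = 0.\<close>
definition condmean :: "(real \<Rightarrow> real) \<Rightarrow> real \<Rightarrow> real" where
  "condmean f x = (LINT t:{..<x}|lborel. t * f t) / cdf f x"

definition betaL :: "(real \<Rightarrow> real) \<Rightarrow> real \<Rightarrow> real \<Rightarrow> real \<Rightarrow> real" where
  "betaL f L vl v = (if vl \<le> v then condmean f v else if L < v then L else 0)"

definition bob_payoff :: "real \<Rightarrow> real \<Rightarrow> real \<Rightarrow> real \<Rightarrow> real" where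
  "bob_payoff L v a b = (if a \<le> b \<and> L \<le> b then v - b else 0)"

definition bob_expected :: "(real \<Rightarrow> real) \<Rightarrow> real \<Rightarrow> real \<Rightarrow> real \<Rightarrow> real \<Rightarrow> real" where
  "bob_expected f L vl v b = (LINT v'|lborel. f v' * bob_payoff L v (betaL f L vl v') b)"

end

theory Submission imports Defs begin

lemma GL:
  fixes \<mu> :: "real measure"
  assumes rd: "real_distribution \<mu>" and pt: "\<And>t. measure \<mu> {t} = 0"
    and S: "S \<in> sets borel" and dc: "\<And>x y. x \<in> S \<Longrightarrow> y \<le> x \<Longrightarrow> y \<in> S"
    and c: "0 \<le> c" and T: "0 \<le> T" and bd: "\<And>t. t \<in> S \<Longrightarrow> c * measure \<mu> {..<t} \<le> T"
  shows "c * measure \<mu> S \<le> T"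
proof -
  interpret real_distribution \<mu> by (rule rd)
  have cle: "Distribution_Functions.cdf \<mu> t \<le> measure \<mu> {..<t}" for t
  proof -
    have "Distribution_Functions.cdf \<mu> t = measure \<mu> ({..<t} \<union> {t})"
      unfolding cdf_def2 by (intro arg_cong[where f="measure \<mu>"]) auto
    also have "\<dots> \<le> measure \<mu> {..<t} + measure \<mu> {t}"
      by (rule measure_subadditive) auto
    finally show ?thesis using pt by simp
  qed
  have G: "c * Distribution_Functions.cdf \<mu> t \<le> T" if "t \<in> S" for t
    using bd[OF that] mult_left_mono[OF cle[of t] c] by linarith
  show ?thesis
  proof (cases "S = {}")
    case True then show ?thesis using T by simp
  next
    case ne: False
    show ?thesis
    proof (cases "bdd_above S")
      case True
      define x where "x = Sup S"
      have lt: "t \<in> S" if "t < x" for t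
      proof -
        have "\<exists>s\<in>S. t < s" using less_cSup_iff[OF ne True, of t] that unfolding x_def by simp
        then obtain s where "s \<in> S" "t < s" by blast
        then show ?thesis using dc by auto
      qed
      have ev: "eventually (\<lambda>t. c * Distribution_Functions.cdf \<mu> t \<le> T) (at_left x)"
        by (rule eventually_mono[OF eventually_at_left_real[of "x - 1" x]]) (auto intro: G lt)
      have lim: "((\<lambda>t. c * Distribution_Functions.cdf \<mu> t) \<longlongrightarrow> c * measure \<mu> {..<x}) (at_left x)"
        by (intro tendsto_intros cdf_at_left)
      have 1: "c * measure \<mu> {..<x} \<le> T"
        by (rule tendsto_upperbound[OF lim ev]) simp
      have "S \<subseteq> {..x}" unfolding x_def using cSup_upper[OF _ True] by (simp add: subset_iff)
      then have "measure \<mu> S \<le> measure \<mu> {..x}" by (intro finite_measure_mono) auto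
      also have "\<dots> \<le> measure \<mu> {..<x}" using cle[of x] unfolding cdf_def2 .
      finally have "c * measure \<mu> S \<le> c * measure \<mu> {..<x}" by (rule mult_left_mono[OF _ c])
      then show ?thesis using 1 by linarith
    next
      case False
      have all: "t \<in> S" for t
      proof -
        have "\<not> (\<forall>y\<in>S. y \<le> t)" using False unfolding bdd_above_def by blast
        then obtain s where "s \<in> S" "t < s" by (auto simp: not_le)
        then show ?thesis using dc by auto
      qed
      have lim: "((\<lambda>t. c * Distribution_Functions.cdf \<mu> t) \<longlongrightarrow> c * 1) at_top"
        by (intro tendsto_intros cdf_lim_at_top_prob)
      have "c * 1 \<le> T"
        by (rule tendsto_upperbound[OF lim always_eventually]) (auto intro: G all)
      have "measure \<mu> S \<le> 1" by simp
      then have "c * measure \<mu> S \<le> c * 1" by (rule mult_left_mono[OF _ c])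
      then show ?thesis using \<open>c * 1 \<le> T\<close> by linarith
    qed
  qed
qed

definition Mf :: "(real \<Rightarrow> real) \<Rightarrow> real \<Rightarrow> real" where
  "Mf f x = (\<integral>t. indicator {..<x} t * (t * f t) \<partial>lborel)"

definition muf :: "(real \<Rightarrow> real) \<Rightarrow> real measure" where
  "muf f = density lborel (\<lambda>t. ennreal (f t))"

context
  fixes f :: "real \<Rightarrow> real" and L vl :: real
  assumes fm[measurable]: "f \<in> borel_measurable borel" and fnn: "\<And>t. 0 \<le> f t"
    and fneg: "\<And>t. t < 0 \<Longrightarrow> f t = 0" and fi: "integrable lborel f"
    and tot: "(LINT t|lborel. f t) = 1"
    and supp: "\<And>a b. 0 \<le> a \<Longrightarrow> a < b \<Longrightarrow> cdf f a < cdf f b"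
    and fti: "integrable lborel (\<lambda>t. t * f t)"
    and L0: "0 \<le> L" and vl0: "0 \<le> vl" and vlL: "L = condmean f vl"
begin

lemma cdf_eq: "cdf f x = (\<integral>t. indicator {..<x} t * f t \<partial>lborel)"
  unfolding cdf_def set_lebesgue_integral_def by simp

lemma condmean_eq: "condmean f x = Mf f x / cdf f x"
  unfolding condmean_def cdf_def Mf_def set_lebesgue_integral_def by simp

lemma int1: "A \<in> sets borel \<Longrightarrow> integrable lborel (\<lambda>t. indicator A t * f t)"
  using integrable_mult_indicator[OF _ fi, of A] by simp

lemma int2: "A \<in> sets borel \<Longrightarrow> integrable lborel (\<lambda>t. indicator A t * (t * f t))"
  using integrable_mult_indicator[OF _ fti, of A] by simp

lemma F_diff: "x \<le> y \<Longrightarrow> cdf f y - cdf f x = (\<integral>t. indicator {x..<y} t * f t \<partial>lborel)"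
proof -
  assume "x \<le> y"
  have "(\<integral>t. indicator {x..<y} t * f t \<partial>lborel) = (\<integral>t. indicator {..<y} t * f t - indicator {..<x} t * f t \<partial>lborel)"
    using \<open>x \<le> y\<close> by (intro Bochner_Integration.integral_cong) (auto split: split_indicator)
  then show ?thesis unfolding cdf_eq by (simp add: int1)
qed

lemma M_diff: "x \<le> y \<Longrightarrow> Mf f y - Mf f x = (\<integral>t. indicator {x..<y} t * (t * f t) \<partial>lborel)"
proof -
  assume "x \<le> y"
  have "(\<integral>t. indicator {x..<y} t * (t * f t) \<partial>lborel) = (\<integral>t. indicator {..<y} t * (t * f t) - indicator {..<x} t * (t * f t) \<partial>lborel)"
    using \<open>x \<le> y\<close> by (intro Bochner_Integration.integral_cong) (auto split: split_indicator)
  then show ?thesis unfolding Mf_def by (simp add: int2)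
qed

lemma F_nonneg: "0 \<le> cdf f x"
  unfolding cdf_eq by (intro Bochner_Integration.integral_nonneg) (auto simp: fnn)

lemma tf_nonneg: "0 \<le> t * f t"
  using fnn[of t] fneg[of t] by (cases "t < 0") auto

lemma M_nonneg: "0 \<le> Mf f x"
  unfolding Mf_def by (intro Bochner_Integration.integral_nonneg) (auto simp: tf_nonneg)

lemma F_zero: "x \<le> 0 \<Longrightarrow> cdf f x = 0"
  unfolding cdf_eq by (intro integral_eq_zero_AE AE_I2) (auto simp: fneg split: split_indicator)

lemma M_zero: "x \<le> 0 \<Longrightarrow> Mf f x = 0"
  unfolding Mf_def by (intro integral_eq_zero_AE AE_I2) (auto simp: fneg split: split_indicator)

lemma M_le: "Mf f x \<le> x * cdf f x"
proof -
  have "Mf f x \<le> (\<integral>t. x * (indicator {..<x} t * f t) \<partial>lborel)"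
    unfolding Mf_def
    by (intro Bochner_Integration.integral_mono int2 integrable_mult_right int1)
       (auto split: split_indicator intro!: mult_right_mono fnn)
  then show ?thesis unfolding cdf_eq by simp
qed

lemma F_mono: "x \<le> y \<Longrightarrow> cdf f x \<le> cdf f y"
proof -
  assume xy: "x \<le> y"
  have "0 \<le> (\<integral>t. indicator {x..<y} t * f t \<partial>lborel)"
    by (intro Bochner_Integration.integral_nonneg) (simp add: fnn)
  then show ?thesis using F_diff[OF xy] by simp
qed

lemma K_mono1: "x \<le> y \<Longrightarrow> y \<le> v \<Longrightarrow> v * cdf f x - Mf f x \<le> v * cdf f y - Mf f y"
proof -
  assume xy: "x \<le> y" and yv: "y \<le> v"
  have "Mf f y - Mf f x \<le> (\<integral>t. v * (indicator {x..<y} t * f t) \<partial>lborel)"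
    unfolding M_diff[OF xy]
    by (intro Bochner_Integration.integral_mono int2 integrable_mult_right int1)
       (use yv in \<open>auto split: split_indicator intro!: mult_right_mono fnn\<close>)
  then show ?thesis using F_diff[OF xy] by (simp add: algebra_simps)
qed

lemma K_mono2: "x \<le> y \<Longrightarrow> v \<le> x \<Longrightarrow> v * cdf f y - Mf f y \<le> v * cdf f x - Mf f x"
proof -
  assume xy: "x \<le> y" and vx: "v \<le> x"
  have "(\<integral>t. v * (indicator {x..<y} t * f t) \<partial>lborel) \<le> Mf f y - Mf f x"
    unfolding M_diff[OF xy]
    by (intro Bochner_Integration.integral_mono int2 integrable_mult_right int1)
       (use vx in \<open>auto split: split_indicator intro!: mult_right_mono fnn\<close>)
  then show ?thesis using F_diff[OF xy] by (simp add: algebra_simps)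
qed

lemma K_le: "v * cdf f x - Mf f x \<le> v * cdf f v - Mf f v"
  using K_mono1[of x v v] K_mono2[of v x v] by (cases "x \<le> v") auto

lemma mu_meas: "A \<in> sets borel \<Longrightarrow> measure (muf f) A = (\<integral>t. indicator A t * f t \<partial>lborel)"
proof -
  assume A: "A \<in> sets borel"
  have "emeasure (muf f) A = (\<integral>\<^sup>+ t. ennreal (f t) * indicator A t \<partial>lborel)"
    unfolding muf_def using A by (simp add: emeasure_density)
  also have "\<dots> = (\<integral>\<^sup>+ t. ennreal (indicator A t * f t) \<partial>lborel)"
    by (intro nn_integral_cong) (auto split: split_indicator)
  also have "\<dots> = ennreal (\<integral>t. indicator A t * f t \<partial>lborel)"
    by (rule nn_integral_eq_integral) (auto intro: int1 A simp: fnn)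
  finally show ?thesis unfolding measure_def
    by (simp add: Bochner_Integration.integral_nonneg fnn)
qed

lemma mu_point: "measure (muf f) {t} = 0"
  by (subst mu_meas) (auto intro!: integral_eq_zero_AE eventually_mono[OF AE_lborel_singleton[of t]])

lemma mu_rd: "real_distribution (muf f)"
proof -
  have "emeasure (muf f) UNIV = (\<integral>\<^sup>+ t. ennreal (f t) \<partial>lborel)"
    unfolding muf_def by (simp add: emeasure_density)
  also have "\<dots> = ennreal 1"
    using tot by (subst nn_integral_eq_integral) (auto intro: fi simp: fnn)
  finally have "prob_space (muf f)"
    by (intro prob_spaceI) (simp add: muf_def)
  then show ?thesis
    by (intro real_distribution.intro real_distribution_axioms.intro) (auto simp: muf_def)
qed


lemma M_diff_ge: "x \<le> y \<Longrightarrow> x * (cdf f y - cdf f x) \<le> Mf f y - Mf f x"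
  using K_mono2[of x y x] by (simp add: algebra_simps)

lemma F_pos: "0 < x \<Longrightarrow> 0 < cdf f x"
  using supp[of 0 x] F_zero[of 0] by simp

lemma mF: "0 \<le> x \<Longrightarrow> condmean f x * cdf f x = Mf f x"
proof (cases "x = 0")
  case True then show ?thesis by (simp add: condmean_eq M_zero F_zero)
next
  case False
  assume "0 \<le> x"
  then have "0 < cdf f x" using False F_pos by simp
  then show ?thesis by (simp add: condmean_eq)
qed

lemma m_nonneg: "0 \<le> condmean f x"
  unfolding condmean_eq using M_nonneg F_nonneg by simp

lemma m_le: "0 \<le> x \<Longrightarrow> condmean f x \<le> x"
proof (cases "x = 0")
  case True then show ?thesis by (simp add: condmean_eq M_zero F_zero)
next
  case False
  assume "0 \<le> x"
  then have "0 < cdf f x" using False F_pos by simp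
  then show ?thesis unfolding condmean_eq using M_le[of x] by (simp add: divide_le_eq)
qed

lemma m_mono: "0 \<le> x \<Longrightarrow> x \<le> y \<Longrightarrow> condmean f x \<le> condmean f y"
proof (cases "x = 0")
  case True then show ?thesis using m_nonneg[of y] by (simp add: condmean_eq M_zero F_zero)
next
  case False
  assume x0: "0 \<le> x" and xy: "x \<le> y"
  have Fx: "0 < cdf f x" using False x0 F_pos by simp
  have Fy: "0 < cdf f y" using Fx F_mono[OF xy] by simp
  define D where "D = cdf f y - cdf f x"
  define E where "E = Mf f y - Mf f x"
  have D0: "0 \<le> D" using F_mono[OF xy] D_def by simp
  have xDE: "x * D \<le> E" using M_diff_ge[OF xy] D_def E_def by simp
  have Mx: "Mf f x \<le> x * cdf f x" by (rule M_le)
  have 1: "Mf f x * D \<le> x * cdf f x * D" using mult_right_mono[OF Mx D0] .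
  have 2: "cdf f x * (x * D) \<le> cdf f x * E" using mult_left_mono[OF xDE] Fx by simp
  have "Mf f x * cdf f y = Mf f x * cdf f x + Mf f x * D" by (simp add: D_def algebra_simps)
  also have "\<dots> \<le> Mf f x * cdf f x + cdf f x * E" using 1 2 by (simp add: algebra_simps)
  also have "\<dots> = Mf f y * cdf f x" by (simp add: E_def algebra_simps)
  finally have "Mf f x * cdf f y \<le> Mf f y * cdf f x" .
  then show ?thesis unfolding condmean_eq using Fx Fy by (simp add: divide_simps)
qed

lemma beta_mono: "mono (betaL f L vl)"
proof (rule monoI)
  fix s t :: real assume st: "s \<le> t"
  show "betaL f L vl s \<le> betaL f L vl t"
  proof (cases "vl \<le> t")
    case True
    have mt: "L \<le> condmean f t" using m_mono[OF vl0 True] vlL by simp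
    show ?thesis
    proof (cases "vl \<le> s")
      case True then show ?thesis using m_mono[of s t] st vl0 \<open>vl \<le> t\<close> by (simp add: betaL_def)
    next
      case False then show ?thesis using mt \<open>vl \<le> t\<close> L0 by (simp add: betaL_def)
    qed
  next
    case False
    then show ?thesis using st L0 by (simp add: betaL_def)
  qed
qed

lemma beta_lt_vl: "t < vl \<Longrightarrow> betaL f L vl t \<le> L"
  using L0 by (simp add: betaL_def)

lemma Smeas: "{t. betaL f L vl t \<le> b} \<in> sets borel"
proof -
  have "betaL f L vl -` {..b} \<inter> space borel \<in> sets borel"
    by (rule measurable_sets[OF borel_measurable_mono[OF beta_mono]]) simp
  moreover have "betaL f L vl -` {..b} \<inter> space borel = {t. betaL f L vl t \<le> b}" by auto
  ultimately show ?thesis by simp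
qed

lemma BE: "bob_expected f L vl v b =
  (if L \<le> b then (v - b) * measure (muf f) {t. betaL f L vl t \<le> b} else 0)"
proof (cases "L \<le> b")
  case True
  have "bob_expected f L vl v b = (\<integral>t. (v - b) * (indicator {t. betaL f L vl t \<le> b} t * f t) \<partial>lborel)"
    unfolding bob_expected_def bob_payoff_def using True
    by (intro Bochner_Integration.integral_cong) (auto split: split_indicator)
  then show ?thesis using True by (simp add: mu_meas[OF Smeas])
next
  case False
  then show ?thesis unfolding bob_expected_def bob_payoff_def by simp
qed

lemma main: "0 \<le> v \<Longrightarrow> bob_expected f L vl v b \<le> bob_expected f L vl v (betaL f L vl v)"
proof -
  assume v: "0 \<le> v"
  let ?\<beta> = "betaL f L vl"
  define \<mu> where "\<mu> = muf f"
  have rd: "real_distribution \<mu>" using mu_rd \<mu>_def by simp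
  interpret real_distribution \<mu> by (rule rd)
  have pt: "\<And>t. measure \<mu> {t} = 0" using mu_point \<mu>_def by simp
  have Sdc: "\<And>b x y. x \<in> {t. ?\<beta> t \<le> b} \<Longrightarrow> y \<le> x \<Longrightarrow> y \<in> {t. ?\<beta> t \<le> b}"
    using beta_mono by (auto simp: mono_def intro: order_trans)
  have BE': "\<And>b. bob_expected f L vl v b = (if L \<le> b then (v - b) * measure \<mu> {t. ?\<beta> t \<le> b} else 0)"
    using BE \<mu>_def by simp
  have Fmu: "\<And>x. measure \<mu> {..<x} = cdf f x" by (simp add: \<mu>_def mu_meas cdf_eq)
  have musub: "\<And>A B. A \<subseteq> B \<Longrightarrow> B \<in> sets borel \<Longrightarrow> measure \<mu> A \<le> measure \<mu> B"
    by (rule finite_measure_mono) auto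
  define T where "T = (if vl \<le> v then v * cdf f v - Mf f v else if L < v then (v - L) * cdf f vl else 0)"
  have T0: "0 \<le> T"
    using M_le[of v] F_nonneg[of vl] by (auto simp: T_def)
  have up: "bob_expected f L vl v b \<le> T"
  proof (cases "L \<le> b")
    case False then show ?thesis by (simp add: BE' T0)
  next
    case Lb: True
    show ?thesis
    proof (cases "v \<le> b")
      case True
      have "(v - b) * measure \<mu> {t. ?\<beta> t \<le> b} \<le> 0"
        using True by (intro mult_nonpos_nonneg) auto
      then show ?thesis using Lb T0 by (simp add: BE')
    next
      case False
      have key: "(v - b) * cdf f t \<le> T" if bt: "?\<beta> t \<le> b" for t
      proof -
        have Mt: "Mf f t \<le> b * cdf f t"
        proof (cases "t \<le> 0")
          case True then show ?thesis by (simp add: F_zero M_zero)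
        next
          case t0: False
          have "condmean f t \<le> b"
          proof (cases "vl \<le> t")
            case True then show ?thesis using bt by (simp add: betaL_def)
          next
            case False
            then have "condmean f t \<le> condmean f vl" using t0 by (intro m_mono) auto
            then show ?thesis using vlL Lb by simp
          qed
          then have "condmean f t * cdf f t \<le> b * cdf f t" by (rule mult_right_mono[OF _ F_nonneg])
          then show ?thesis using mF[of t] t0 by simp
        qed
        have 1: "(v - b) * cdf f t \<le> v * cdf f t - Mf f t" using Mt by (simp add: algebra_simps)
        show "(v - b) * cdf f t \<le> T"
        proof (cases "vl \<le> v")
          case True then show ?thesis using 1 K_le[of v t] by (simp add: T_def)
        next
          case nv: False
          have Lv: "L < v" using Lb False by simp
          have Kvl: "v * cdf f vl - Mf f vl = (v - L) * cdf f vl"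
            using mF[OF vl0] vlL by (simp add: algebra_simps)
          show ?thesis
          proof (cases "vl \<le> t")
            case True
            then have "v * cdf f t - Mf f t \<le> v * cdf f vl - Mf f vl" using K_mono2[of vl t v] nv by simp
            then show ?thesis using 1 Kvl nv Lv by (simp add: T_def)
          next
            case False
            have "(v - b) * cdf f t \<le> (v - L) * cdf f vl"
              by (intro mult_mono) (use Lb Lv F_mono[of t vl] False F_nonneg in auto)
            then show ?thesis using nv Lv by (simp add: T_def)
          qed
        qed
      qed
      have "(v - b) * measure \<mu> {t. ?\<beta> t \<le> b} \<le> T"
        by (rule GL[OF rd pt Smeas Sdc]) (use False T0 key Fmu in auto)
      then show ?thesis using Lb by (simp add: BE')
    qed
  qed
  have low: "T \<le> bob_expected f L vl v (?\<beta> v)"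
  proof (cases "vl \<le> v")
    case True
    have bv: "?\<beta> v = condmean f v" using True by (simp add: betaL_def)
    have Lb: "L \<le> condmean f v" using m_mono[OF vl0 True] vlL by simp
    have sub: "{..<v} \<subseteq> {t. ?\<beta> t \<le> ?\<beta> v}" using beta_mono by (auto simp: mono_def)
    have "cdf f v \<le> measure \<mu> {t. ?\<beta> t \<le> ?\<beta> v}" using musub[OF sub Smeas] Fmu by simp
    moreover have "0 \<le> v - condmean f v" using m_le v by simp
    ultimately have "(v - condmean f v) * cdf f v \<le> (v - condmean f v) * measure \<mu> {t. ?\<beta> t \<le> ?\<beta> v}"
      by (rule mult_left_mono)
    moreover have "(v - condmean f v) * cdf f v = v * cdf f v - Mf f v" using mF[OF v] by (simp add: algebra_simps)
    ultimately show ?thesis using True Lb bv by (simp add: T_def BE')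
  next
    case nv: False
    show ?thesis
    proof (cases "L < v")
      case True
      have bv: "?\<beta> v = L" using True nv by (simp add: betaL_def)
      have sub: "{..<vl} \<subseteq> {t. ?\<beta> t \<le> L}" using beta_lt_vl by auto
      have "cdf f vl \<le> measure \<mu> {t. ?\<beta> t \<le> L}" using musub[OF sub Smeas] Fmu by simp
      then have "(v - L) * cdf f vl \<le> (v - L) * measure \<mu> {t. ?\<beta> t \<le> L}"
        using True by (intro mult_left_mono) auto
      then show ?thesis using True nv bv by (simp add: T_def BE')
    next
      case False
      have bv: "?\<beta> v = 0" using False nv by (simp add: betaL_def)
      show ?thesis using v nv False by (simp add: T_def BE' bv)
    qed
  qed
  show ?thesis using up low by linarith
qed

end

theorem lemma4:
  fixes f :: "real \<Rightarrow> real" and L vl :: real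
  assumes f_meas: "f \<in> borel_measurable borel"
    and f_nonneg: "\<And>t. 0 \<le> f t"
    and f_neg: "\<And>t. t < 0 \<Longrightarrow> f t = 0"
    and f_int: "integrable lborel f"
    and f_total: "(LINT t|lborel. f t) = 1"
    and support: "\<And>a b. 0 \<le> a \<Longrightarrow> a < b \<Longrightarrow> cdf f a < cdf f b"
    and finite_mean: "integrable lborel (\<lambda>t. t * f t)"
    and mean_gt: "(LINT t|lborel. t * f t) > L"
    and L_nonneg: "0 \<le> L"
    and vl_supp: "0 \<le> vl"
    and vl_def: "L = condmean f vl"
  shows "\<forall>v\<ge>0. \<forall>b. bob_expected f L vl v b \<le> bob_expected f L vl v (betaL f L vl v)"
  using main[OF f_meas f_nonneg f_neg f_int f_total support finite_mean L_nonneg vl_supp vl_def]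
  by blast

end
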